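(* Let $(X,d,\mu)$ be a space of homogeneous type, $1\leq r<\infty$, $q=2r-1$. If $u\in RH_{q}$ and $u^{r}\in A_{\infty}$, then for $s=1+\frac{1}{2\tau[u^{r}]_{A_{\infty}}}$, every cube $Q$ of a dyadic system and every measurable subset $E\subset Q$, $$\frac{u^{sr}(E)}{u^{sr}(c_{d}Q)}\lesssim[u]_{RH_{q}}^{q/4}\left(\frac{u(E)}{u(c_{d}Q)}\right)^{\frac{1}{4}}.$$
   Context: Space of homogeneous type: quasi-metric $d$, doubling Borel measure $\mu$. Dyadic system with parameters $c_0\le C_0$, $\delta$: cubes $Q=Q^k_j$ with $B(z^k_j,c_0\delta^k)\subset Q\subset B(z^k_j,C_0\delta^k)$; dilation $\alpha Q:=B(z^k_j,\alpha C_0\delta^k)$ for $\alpha\ge1$ (a ball). $w\in RH_q$ means $\big(\frac{w^q(B)}{\mu(B)}\big)^{1/q}\le[w]_{RH_q}\frac{w(c_dB)}{\mu(c_dB)}$ for all balls $B$, with $c_d\ge1$ a fixed constant depending on $X$. $[w]_{A_\infty}=\sup_B\frac1{w(B)}\int_BM(\chi_Bw)$. $\tau>0$ is the constant (depending on $X$) of the sharp reverse Hölder inequality: if $w\in A_\infty$ and $1\le t\le1+\frac1{\tau[w]_{A_\infty}}$ then $\big(\frac{w^t(B)}{\mu(B)}\big)^{1/t}\le c\frac{w(c_dB)}{\mu(c_dB)}$. Implicit constants depend only on $X$ and the dyadic system. *)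

theory Defs
  imports "HOL-Analysis.Analysis"
begin

definition qball :: "('a \<Rightarrow> 'a \<Rightarrow> real) \<Rightarrow> 'a \<Rightarrow> real \<Rightarrow> 'a set" where
  "qball d x \<rho> = {y. d x y < \<rho>}"

definition quasi_metric :: "('a \<Rightarrow> 'a \<Rightarrow> real) \<Rightarrow> real \<Rightarrow> bool" where
  "quasi_metric d A0 \<longleftrightarrow> 1 \<le> A0 \<and> (\<forall>x y. 0 \<le> d x y) \<and> (\<forall>x y. d x y = 0 \<longleftrightarrow> x = y)
     \<and> (\<forall>x y. d x y = d y x) \<and> (\<forall>x y z. d x z \<le> A0 * (d x y + d y z))"

definition homogeneous_space :: "'a measure \<Rightarrow> ('a \<Rightarrow> 'a \<Rightarrow> real) \<Rightarrow> real \<Rightarrow> real \<Rightarrow> bool" where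
  "homogeneous_space \<mu> d A0 Cdb \<longleftrightarrow> quasi_metric d A0 \<and> space \<mu> = UNIV
     \<and> (\<forall>U. (\<forall>x\<in>U. \<exists>\<rho>>0. qball d x \<rho> \<subseteq> U) \<longrightarrow> U \<in> sets \<mu>)
     \<and> (\<forall>x \<rho>. qball d x \<rho> \<in> sets \<mu>)
     \<and> (\<forall>x \<rho>. 0 < \<rho> \<longrightarrow> 0 < emeasure \<mu> (qball d x \<rho>) \<and> emeasure \<mu> (qball d x \<rho>) < \<infinity>)
     \<and> (\<forall>x \<rho>. 0 < \<rho> \<longrightarrow> emeasure \<mu> (qball d x (2 * \<rho>)) \<le> ennreal Cdb * emeasure \<mu> (qball d x \<rho>))"

definition weight :: "'a measure \<Rightarrow> ('a \<Rightarrow> 'a \<Rightarrow> real) \<Rightarrow> ('a \<Rightarrow> real) \<Rightarrow> bool" where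
  "weight \<mu> d w \<longleftrightarrow> w \<in> borel_measurable \<mu> \<and> (\<forall>x. 0 \<le> w x)
     \<and> (\<forall>x \<rho>. set_integrable \<mu> (qball d x \<rho>) w)"

definition wm :: "'a measure \<Rightarrow> ('a \<Rightarrow> real) \<Rightarrow> 'a set \<Rightarrow> real" where
  "wm \<mu> w E = set_lebesgue_integral \<mu> E w"

definition RH_holds :: "'a measure \<Rightarrow> ('a \<Rightarrow> 'a \<Rightarrow> real) \<Rightarrow> real \<Rightarrow> real \<Rightarrow> ('a \<Rightarrow> real) \<Rightarrow> real \<Rightarrow> bool" where
  "RH_holds \<mu> d cd q w C \<longleftrightarrow> (\<forall>x \<rho>. 0 < \<rho> \<longrightarrow>
      set_integrable \<mu> (qball d x \<rho>) (\<lambda>y. w y powr q) \<and>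
      (wm \<mu> (\<lambda>y. w y powr q) (qball d x \<rho>) / measure \<mu> (qball d x \<rho>)) powr (1 / q)
        \<le> C * (wm \<mu> w (qball d x (cd * \<rho>)) / measure \<mu> (qball d x (cd * \<rho>))))"

definition in_RH :: "'a measure \<Rightarrow> ('a \<Rightarrow> 'a \<Rightarrow> real) \<Rightarrow> real \<Rightarrow> real \<Rightarrow> ('a \<Rightarrow> real) \<Rightarrow> bool" where
  "in_RH \<mu> d cd q w \<longleftrightarrow> weight \<mu> d w \<and> (\<exists>C. RH_holds \<mu> d cd q w C)"

definition RH_const :: "'a measure \<Rightarrow> ('a \<Rightarrow> 'a \<Rightarrow> real) \<Rightarrow> real \<Rightarrow> real \<Rightarrow> ('a \<Rightarrow> real) \<Rightarrow> real" where
  "RH_const \<mu> d cd q w = Inf {C. 0 \<le> C \<and> RH_holds \<mu> d cd q w C}"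

definition maxf :: "'a measure \<Rightarrow> ('a \<Rightarrow> 'a \<Rightarrow> real) \<Rightarrow> ('a \<Rightarrow> real) \<Rightarrow> 'a \<Rightarrow> ennreal" where
  "maxf \<mu> d f x = (SUP p \<in> {(y, \<rho>). 0 < \<rho> \<and> x \<in> qball d y \<rho>}.
      (\<integral>\<^sup>+ z\<in>qball d (fst p) (snd p). ennreal \<bar>f z\<bar> \<partial>\<mu>) / emeasure \<mu> (qball d (fst p) (snd p)))"

text \<open>[w]_{A_\<infinity>} = sup_B (1/w(B)) int_B M(chi_B w) (Fujii--Wilson constant).\<close>
definition Ainf_const_enn :: "'a measure \<Rightarrow> ('a \<Rightarrow> 'a \<Rightarrow> real) \<Rightarrow> ('a \<Rightarrow> real) \<Rightarrow> ennreal" where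
  "Ainf_const_enn \<mu> d w = (SUP p \<in> {(x, \<rho>). 0 < \<rho>}.
      (\<integral>\<^sup>+ y\<in>qball d (fst p) (snd p).
          maxf \<mu> d (\<lambda>z. indicator (qball d (fst p) (snd p)) z * w z) y \<partial>\<mu>)
      / ennreal (wm \<mu> w (qball d (fst p) (snd p))))"

definition in_Ainf :: "'a measure \<Rightarrow> ('a \<Rightarrow> 'a \<Rightarrow> real) \<Rightarrow> ('a \<Rightarrow> real) \<Rightarrow> bool" where
  "in_Ainf \<mu> d w \<longleftrightarrow> weight \<mu> d w \<and> Ainf_const_enn \<mu> d w < \<infinity>"

definition Ainf_const :: "'a measure \<Rightarrow> ('a \<Rightarrow> 'a \<Rightarrow> real) \<Rightarrow> ('a \<Rightarrow> real) \<Rightarrow> real" where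
  "Ainf_const \<mu> d w = enn2real (Ainf_const_enn \<mu> d w)"

definition sharp_RHI :: "'a measure \<Rightarrow> ('a \<Rightarrow> 'a \<Rightarrow> real) \<Rightarrow> real \<Rightarrow> real \<Rightarrow> real \<Rightarrow> bool" where
  "sharp_RHI \<mu> d cd \<tau> c \<longleftrightarrow> 0 < \<tau> \<and> (\<forall>w t. in_Ainf \<mu> d w \<longrightarrow> 1 \<le> t \<longrightarrow>
      t \<le> 1 + 1 / (\<tau> * Ainf_const \<mu> d w) \<longrightarrow> RH_holds \<mu> d cd t w c)"

text \<open>Dyadic system (Hytonen--Kairema): cubes D k j, j \<in> J k, with centres z k j.\<close>
definition dyadic_system :: "'a measure \<Rightarrow> ('a \<Rightarrow> 'a \<Rightarrow> real) \<Rightarrow> real \<Rightarrow> real \<Rightarrow> real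
    \<Rightarrow> (int \<Rightarrow> 'i set) \<Rightarrow> (int \<Rightarrow> 'i \<Rightarrow> 'a set) \<Rightarrow> (int \<Rightarrow> 'i \<Rightarrow> 'a) \<Rightarrow> bool" where
  "dyadic_system \<mu> d \<delta> c0 C0 J D z \<longleftrightarrow> 0 < \<delta> \<and> \<delta> < 1 \<and> 0 < c0 \<and> c0 \<le> C0
     \<and> (\<forall>k. \<forall>j\<in>J k. D k j \<in> sets \<mu>)
     \<and> (\<forall>k. \<Union> (D k ` J k) = UNIV)
     \<and> (\<forall>k. \<forall>i\<in>J k. \<forall>j\<in>J k. i \<noteq> j \<longrightarrow> D k i \<inter> D k j = {})
     \<and> (\<forall>k l. k \<le> l \<longrightarrow> (\<forall>i\<in>J k. \<forall>j\<in>J l. D l j \<subseteq> D k i \<or> D k i \<inter> D l j = {}))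
     \<and> (\<forall>k. \<forall>j\<in>J k. qball d (z k j) (c0 * \<delta> powr (real_of_int k)) \<subseteq> D k j
                     \<and> D k j \<subseteq> qball d (z k j) (C0 * \<delta> powr (real_of_int k)))"

end

theory Submission
  imports Defs
begin

lemma set_int_nonneg:
  fixes f :: "'a \<Rightarrow> real"
  assumes "\<And>x. 0 \<le> f x"
  shows "0 \<le> (LINT x:A|M. f x)"
  unfolding set_lebesgue_integral_def using assms by (simp add: indicator_def)

lemma cs_lemma:
  fixes h F G :: "'a \<Rightarrow> real"
  assumes ih: "set_integrable M S h" and iF: "set_integrable M S F" and iG: "set_integrable M S G"
    and nh: "\<And>x. 0 \<le> h x" and nF: "\<And>x. 0 \<le> F x" and nG: "\<And>x. 0 \<le> G x"
    and le: "\<And>x. x \<in> S \<Longrightarrow> (h x)\<^sup>2 \<le> F x * G x"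
  shows "(LINT x:S|M. h x) \<le> sqrt (LINT x:S|M. F x) * sqrt (LINT x:S|M. G x)"
proof -
  define H where "H = (LINT x:S|M. h x)"
  define P where "P = (LINT x:S|M. F x)"
  define Q where "Q = (LINT x:S|M. G x)"
  have H0: "0 \<le> H" "0 \<le> P" "0 \<le> Q" unfolding H_def P_def Q_def
    using nh nF nG by (auto intro: set_int_nonneg)
  have key: "H \<le> (l * P + Q / l) / 2" if l: "0 < l" for l
  proof -
    have pt: "h x \<le> (l * F x + G x / l) / 2" if "x \<in> S" for x
    proof -
      have "(h x)\<^sup>2 \<le> F x * G x" using le that .
      also have "F x * G x \<le> ((l * F x + G x / l) / 2)\<^sup>2"
      proof -
        have gen: "((a + b) / 2)\<^sup>2 - a * b = ((a - b) / 2)\<^sup>2" for a b :: real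
          by (simp add: power2_eq_square algebra_simps)
        have "F x * G x = (l * F x) * (G x / l)" using l by simp
        hence "((l * F x + G x / l) / 2)\<^sup>2 - F x * G x = ((l * F x - G x / l) / 2)\<^sup>2"
          using gen[of "l * F x" "G x / l"] by simp
        moreover have "0 \<le> ((l * F x - G x / l) / 2)\<^sup>2" by simp
        ultimately show ?thesis by linarith
      qed
      finally have sq: "(h x)\<^sup>2 \<le> ((l * F x + G x / l) / 2)\<^sup>2" .
      have "0 \<le> l * F x" using nF[of x] l by simp
      moreover have "0 \<le> G x / l" using nG[of x] l by simp
      ultimately have "0 \<le> (l * F x + G x / l) / 2" by simp
      thus ?thesis using sq power2_le_imp_le by blast
    qed
    have "H \<le> (LINT x:S|M. (l * F x + G x / l) / 2)"
      unfolding H_def using ih iF iG pt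
      by (intro set_integral_mono) auto
    also have "\<dots> = (l * P + Q / l) / 2"
      unfolding P_def Q_def using iF iG
      by (simp add: set_integral_add)
    finally show ?thesis .
  qed
  show ?thesis
  proof (cases "P = 0 \<or> Q = 0")
    case True
    have "H \<le> 0"
    proof (rule ccontr)
      assume "\<not> H \<le> 0" hence Hp: "0 < H" by simp
      show False
      proof (cases "P = 0")
        case True
        have "H \<le> (((Q+1)/H) * P + Q / ((Q+1)/H)) / 2" using key[of "(Q+1)/H"] Hp H0 by simp
        also have "\<dots> = Q * H / (2*(Q+1))" using True H0 Hp by (simp add: field_simps)
        also have "\<dots> < H" using H0 Hp mult_nonneg_nonneg[of H Q] by (simp add: field_simps) (smt (verit) mult_nonneg_nonneg)
        finally show False by simp
      next
        case False
        hence Q0: "Q = 0" using \<open>P = 0 \<or> Q = 0\<close> by simp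
        have "H \<le> ((H/(P+1)) * P + Q / (H/(P+1))) / 2" using key[of "H/(P+1)"] Hp H0 by simp
        also have "\<dots> = H * P / (2*(P+1))" using Q0 H0 Hp by (simp add: field_simps)
        also have "\<dots> < H" using H0 Hp by (simp add: field_simps) (smt (verit) mult_nonneg_nonneg)
        finally show False by simp
      qed
    qed
    thus ?thesis using H0 unfolding H_def[symmetric] P_def[symmetric] Q_def[symmetric] by simp
  next
    case False
    hence Pp: "0 < P" and Qp: "0 < Q" using H0 by auto
    define l where "l = sqrt Q / sqrt P"
    have lp: "0 < l" unfolding l_def using Pp Qp by simp
    have "H \<le> (l * P + Q / l) / 2" using key[OF lp] .
    also have "\<dots> = sqrt P * sqrt Q"
    proof -
      have sP: "sqrt P * sqrt P = P" "sqrt Q * sqrt Q = Q" using Pp Qp by simp_all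
      have spp: "sqrt P > 0" "sqrt Q > 0" using Pp Qp by simp_all
      have "l * P = sqrt P * sqrt Q" unfolding l_def
        by (subst sP(1)[symmetric]) (use spp in \<open>simp add: field_simps\<close>)
      moreover have "Q / l = sqrt P * sqrt Q" unfolding l_def
        by (subst sP(2)[symmetric]) (use spp in \<open>simp add: field_simps\<close>)
      ultimately show ?thesis by simp
    qed
    finally show ?thesis unfolding H_def P_def Q_def .
  qed
qed


lemma tangent_powr:
  fixes x m p :: real
  assumes "0 \<le> x" "0 < m" "1 \<le> p"
  shows "m powr p + p * m powr (p - 1) * (x - m) \<le> x powr p"
proof (cases "x = 0")
  case True
  have "m powr (p - 1) * m = m powr p" using assms(2)
    by (simp add: powr_diff)
  hence e: "p * m powr (p - 1) * (x - m) = - (p * m powr p)" using True by (simp add: algebra_simps)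
  have "m powr p \<le> p * m powr p" using mult_right_mono[OF assms(3), of "m powr p"] by simp
  thus ?thesis unfolding e using True by simp
next
  case False
  hence xp: "0 < x" using assms(1) by simp
  have d: "((\<lambda>y. y powr p) has_field_derivative p * m powr (p - 1)) (at m within {0<..})"
    using has_real_derivative_powr[OF assms(2)] by (rule has_field_derivative_at_within)
  have "p * m powr (p - 1) * (x - m) \<le> x powr p - m powr p"
    using convex_on_imp_above_tangent[OF powr_convex[OF assms(3)] _ _ _ d] xp assms(2)
    by (simp add: interior_open)
  thus ?thesis by simp
qed

lemma pm_lemma:
  fixes f :: "'a \<Rightarrow> real"
  assumes S: "S \<in> sets M" "emeasure M S \<noteq> \<infinity>" "0 < measure M S"
    and nf: "\<And>x. 0 \<le> f x" and i1: "set_integrable M S f"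
    and i2: "set_integrable M S (\<lambda>x. f x powr p)" and p: "1 \<le> p"
  shows "((LINT x:S|M. f x) / measure M S) powr p \<le> (LINT x:S|M. f x powr p) / measure M S"
proof -
  define m where "m = (LINT x:S|M. f x) / measure M S"
  have m0: "0 \<le> m" unfolding m_def using nf S
    by (simp add: set_lebesgue_integral_def indicator_def)
  show ?thesis
  proof (cases "m = 0")
    case True
    have "0 \<le> (LINT x:S|M. f x powr p)"
      by (simp add: set_lebesgue_integral_def indicator_def)
    thus ?thesis using True m_def S by simp
  next
    case False
    hence mp: "0 < m" using m0 by simp
    have ic: "set_integrable M S (\<lambda>x. c)" for c :: real
      using S unfolding set_integrable_def
      by (simp add: integrable_real_indicator less_top)
    have "(LINT x:S|M. m powr p + p * m powr (p - 1) * (f x - m)) \<le> (LINT x:S|M. f x powr p)"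
      using tangent_powr[OF nf mp p] ic i1 i2
      by (intro set_integral_mono) auto
    also have "(LINT x:S|M. m powr p + p * m powr (p - 1) * (f x - m))
        = measure M S * m powr p + p * m powr (p - 1) * ((LINT x:S|M. f x) - measure M S * m)"
      using ic i1 S by (simp add: set_integral_add set_integral_diff set_integral_const)
    also have "(LINT x:S|M. f x) - measure M S * m = 0" unfolding m_def using S by simp
    finally have "measure M S * m powr p \<le> (LINT x:S|M. f x powr p)" by simp
    thus ?thesis unfolding m_def[symmetric] using S by (simp add: field_simps)
  qed
qed


lemma sqrt_sqrt_powr: "0 \<le> x \<Longrightarrow> sqrt (sqrt x) = x powr (1/4)"
proof -
  assume x: "0 \<le> x"
  have "sqrt (sqrt x) = (x powr (1/2)) powr (1/2)" using x by (simp add: powr_half_sqrt)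
  also have "\<dots> = x powr (1/4)" by (simp add: powr_powr)
  finally show ?thesis .
qed

lemma alg_lemma:
  fixes IE I' aE a WE bE b UE m m' c K W' U' s r t q :: real
  assumes h1: "IE \<le> sqrt aE * sqrt WE" and h2: "aE \<le> a"
    and h3: "WE \<le> sqrt bE * sqrt UE" and h4: "bE \<le> b"
    and h5: "(a / m) powr (1 / t) \<le> c * (W' / m')"
    and h6: "(b / m) powr (1 / q) \<le> K * (U' / m')"
    and h7: "(W' / m') powr s \<le> I' / m'"
    and h8: "(U' / m') powr r \<le> W' / m'"
    and mm: "0 < m" "m \<le> m'" and U'p: "0 < U'"
    and ts: "t = 2 * s - 1" and qr: "q = 2 * r - 1" and s1: "1 \<le> s" and r1: "1 \<le> r"
    and nn: "0 \<le> IE" "0 \<le> aE" "0 \<le> WE" "0 \<le> bE" "0 \<le> UE" "0 \<le> K"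
  shows "IE / I' \<le> c powr (t / 2) * K powr (q / 4) * (UE / U') powr (1 / 4)"
proof -
  define \<alpha> where "\<alpha> = W' / m'"
  define \<beta> where "\<beta> = U' / m'"
  have m'p: "0 < m'" using mm by simp
  have bp: "0 < \<beta>" unfolding \<beta>_def using m'p U'p by simp
  have ap: "0 < \<alpha>"
  proof -
    have "0 < \<beta> powr r" using bp by simp
    also have "\<dots> \<le> \<alpha>" using h8 unfolding \<alpha>_def \<beta>_def .
    finally show ?thesis .
  qed
  have tp: "1 \<le> t" "1 \<le> q" using ts qr s1 r1 by simp_all
  have c0: "0 \<le> c"
  proof -
    have "0 \<le> (a / m) powr (1 / t)" by simp
    also have "\<dots> \<le> c * \<alpha>" using h5 unfolding \<alpha>_def .
    finally show ?thesis using ap by (simp add: zero_le_mult_iff)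
  qed
  have I'p: "0 < I'"
  proof -
    have "0 < \<alpha> powr s" using ap by simp
    also have "\<dots> \<le> I' / m'" using h7 unfolding \<alpha>_def .
    finally show ?thesis using m'p by (simp add: zero_less_divide_iff)
  qed
  show ?thesis
  proof (cases "IE = 0")
    case True
    thus ?thesis using c0 nn by simp
  next
    case False
    hence IEp: "0 < IE" using nn by simp
    have a0: "0 \<le> a" "0 \<le> b" using h2 h4 nn by simp_all
    have A1: "a powr (1/2) \<le> m powr (1/2) * c powr (t/2) * \<alpha> powr (t/2)"
    proof -
      have "a / m = ((a / m) powr (1 / t)) powr t" using tp a0 mm by (simp add: powr_powr)
      also have "\<dots> \<le> (c * \<alpha>) powr t" using h5 unfolding \<alpha>_def[symmetric]
        using tp by (intro powr_mono2) auto
      finally have "a \<le> m * (c * \<alpha>) powr t" using mm by (simp add: field_simps)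
      hence "a powr (1/2) \<le> (m * (c * \<alpha>) powr t) powr (1/2)" using a0 by (intro powr_mono2) auto
      also have "\<dots> = m powr (1/2) * c powr (t/2) * \<alpha> powr (t/2)"
        using mm c0 ap by (simp add: powr_mult powr_powr)
      finally show ?thesis .
    qed
    have B1: "b powr (1/4) \<le> m powr (1/4) * K powr (q/4) * \<beta> powr (q/4)"
    proof -
      have "b / m = ((b / m) powr (1 / q)) powr q" using tp a0 mm by (simp add: powr_powr)
      also have "\<dots> \<le> (K * \<beta>) powr q" using h6 unfolding \<beta>_def[symmetric]
        using tp by (intro powr_mono2) auto
      finally have "b \<le> m * (K * \<beta>) powr q" using mm by (simp add: field_simps)
      hence "b powr (1/4) \<le> (m * (K * \<beta>) powr q) powr (1/4)" using a0 by (intro powr_mono2) auto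
      also have "\<dots> = m powr (1/4) * K powr (q/4) * \<beta> powr (q/4)"
        using mm nn bp by (simp add: powr_mult powr_powr)
      finally show ?thesis .
    qed
    have E1: "IE \<le> a powr (1/2) * (b powr (1/4) * UE powr (1/4))"
    proof -
      have sw: "sqrt WE \<le> sqrt (sqrt b * sqrt UE)"
        using h3 h4 nn by (meson mult_right_mono order_trans real_sqrt_ge_zero real_sqrt_le_mono)
      have "IE \<le> sqrt a * sqrt WE" using h1 h2 nn
        by (meson mult_right_mono order_trans real_sqrt_ge_zero real_sqrt_le_mono)
      also have "sqrt a * sqrt WE \<le> sqrt a * sqrt (sqrt b * sqrt UE)" by (rule mult_left_mono[OF sw]) (simp add: a0)
      also have "\<dots> = a powr (1/2) * (b powr (1/4) * UE powr (1/4))"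
        using a0 nn by (simp add: real_sqrt_mult sqrt_sqrt_powr powr_half_sqrt)
      finally show ?thesis .
    qed
    define P where "P = c powr (t/2) * K powr (q/4) * UE powr (1/4)"
    have P0: "0 \<le> P" unfolding P_def by simp
    have "IE \<le> P * (m powr (3/4) * \<alpha> powr (t/2) * \<beta> powr (q/4))"
    proof -
      have bb: "b powr (1/4) * UE powr (1/4) \<le> (m powr (1/4) * K powr (q/4) * \<beta> powr (q/4)) * UE powr (1/4)"
        by (rule mult_right_mono[OF B1]) simp
      have "a powr (1/2) * (b powr (1/4) * UE powr (1/4)) \<le> (m powr (1/2) * c powr (t/2) * \<alpha> powr (t/2)) * ((m powr (1/4) * K powr (q/4) * \<beta> powr (q/4)) * UE powr (1/4))"
        by (rule mult_mono[OF A1 bb]) auto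
      with E1 have "IE \<le> (m powr (1/2) * c powr (t/2) * \<alpha> powr (t/2)) * ((m powr (1/4) * K powr (q/4) * \<beta> powr (q/4)) * UE powr (1/4))"
        by linarith
      also have mm34: "m powr (1/2) * m powr (1/4) = m powr (3/4)" using mm by (simp flip: powr_add)
      have "(m powr (1/2) * c powr (t/2) * \<alpha> powr (t/2)) * ((m powr (1/4) * K powr (q/4) * \<beta> powr (q/4)) * UE powr (1/4))
           = P * ((m powr (1/2) * m powr (1/4)) * \<alpha> powr (t/2) * \<beta> powr (q/4))" unfolding P_def
        by (simp add: ac_simps)
      also have "\<dots> = P * (m powr (3/4) * \<alpha> powr (t/2) * \<beta> powr (q/4))" unfolding mm34 ..
      finally show ?thesis .
    qed
    hence "IE / I' \<le> P * (m powr (3/4) * \<alpha> powr (t/2) * \<beta> powr (q/4)) / I'"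
      using I'p by (simp add: divide_right_mono)
    also have "\<dots> \<le> P * (m powr (3/4) * \<alpha> powr (t/2) * \<beta> powr (q/4)) / (m' * \<alpha> powr s)"
    proof -
      have "m' * \<alpha> powr s \<le> I'" using h7 m'p unfolding \<alpha>_def by (simp add: field_simps)
      moreover have "0 < m' * \<alpha> powr s" using m'p ap by simp
      ultimately show ?thesis using P0
        by (intro divide_left_mono) (auto intro!: mult_nonneg_nonneg)
    qed
    also have "\<dots> = P * ((m powr (3/4) * \<beta> powr (r/2)) / (m' powr (3/4) * \<alpha> powr (1/2)))
                      * (\<beta> powr (-1/4) * m' powr (-1/4))"
    proof -
      have e1: "\<beta> powr (q/4) = \<beta> powr (r/2) * \<beta> powr (-1/4)"
        using bp qr by (simp flip: powr_add) (simp add: field_simps)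
      have e2: "\<alpha> powr (t/2) / \<alpha> powr s = 1 / \<alpha> powr (1/2)"
      proof -
        have ts2: "t/2 - s = -(1/2)" using ts by linarith
        have "\<alpha> powr (t/2) / \<alpha> powr s = \<alpha> powr (t/2 - s)" by (simp add: powr_diff)
        also have "\<dots> = \<alpha> powr (-(1/2))" unfolding ts2 ..
        also have "\<alpha> powr (-(1/2)) = 1 / \<alpha> powr (1/2)" by (simp add: powr_minus_divide)
        finally show ?thesis .
      qed
      have e3: "m' = m' powr (3/4) * m' powr (1/4)" using m'p by (simp flip: powr_add)
      have e4: "m' powr (-1/4) = 1 / m' powr (1/4)" using m'p by (simp add: powr_minus_divide)
      have "P * (m powr (3/4) * \<alpha> powr (t/2) * \<beta> powr (q/4)) / (m' * \<alpha> powr s)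
          = P * m powr (3/4) * \<beta> powr (q/4) * (\<alpha> powr (t/2) / \<alpha> powr s) / m'" by (simp add: ac_simps)
      also have "\<dots> = P * m powr (3/4) * (\<beta> powr (r/2) * \<beta> powr (-1/4)) * (1 / \<alpha> powr (1/2)) / m'"
        by (simp only: e1 e2)
      also have "\<dots> = P * m powr (3/4) * (\<beta> powr (r/2) * \<beta> powr (-1/4)) * (1 / \<alpha> powr (1/2))
            / (m' powr (3/4) * m' powr (1/4))" by (subst e3[symmetric]) (rule refl)
      also have "\<dots> = P * ((m powr (3/4) * \<beta> powr (r/2)) / (m' powr (3/4) * \<alpha> powr (1/2)))
                      * (\<beta> powr (-1/4) * m' powr (-1/4))"
      proof -
        have gen: "P * M * (br * bm) * (1 / al) / (A * B) = P * ((M * br) / (A * al)) * (bm * (1 / B))"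
          if "0 < A" "0 < B" "0 < al" for P M br bm al A B :: real
          using that by (simp add: field_simps)
        show ?thesis unfolding e4 using m'p ap by (intro gen) auto
      qed
      finally show ?thesis .
    qed
    also have "\<dots> \<le> P * 1 * (\<beta> powr (-1/4) * m' powr (-1/4))"
    proof -
      have "m powr (3/4) \<le> m' powr (3/4)" using mm by (intro powr_mono2) auto
      moreover have "\<beta> powr (r/2) \<le> \<alpha> powr (1/2)"
      proof -
        have "\<beta> powr (r/2) = (\<beta> powr r) powr (1/2)" by (simp add: powr_powr)
        also have "\<dots> \<le> \<alpha> powr (1/2)" using h8 unfolding \<alpha>_def[symmetric] \<beta>_def[symmetric]
          by (intro powr_mono2) auto
        finally show ?thesis .
      qed
      ultimately have "m powr (3/4) * \<beta> powr (r/2) \<le> m' powr (3/4) * \<alpha> powr (1/2)"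
        by (intro mult_mono) auto
      hence "(m powr (3/4) * \<beta> powr (r/2)) / (m' powr (3/4) * \<alpha> powr (1/2)) \<le> 1"
        using m'p ap by simp
      thus ?thesis using P0 by (intro mult_right_mono mult_left_mono) auto
    qed
    also have "\<dots> = c powr (t / 2) * K powr (q / 4) * (UE / U') powr (1 / 4)"
    proof -
      have "U' = \<beta> * m'" unfolding \<beta>_def using m'p by simp
      hence "(UE / U') powr (1/4) = UE powr (1/4) * (\<beta> powr (-1/4) * m' powr (-1/4))"
        using bp m'p nn by (simp add: powr_divide powr_mult powr_minus_divide)
      thus ?thesis unfolding P_def by simp
    qed
    finally show ?thesis .
  qed
qed


lemma set_int_subset_le:
  fixes f :: "'a \<Rightarrow> real"
  assumes iB: "set_integrable M B f" and A: "A \<in> sets M" "A \<subseteq> B" and nf: "\<And>x. 0 \<le> f x"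
  shows "(LINT x:A|M. f x) \<le> (LINT x:B|M. f x)"
proof -
  have iA: "set_integrable M A f" using set_integrable_subset[OF iB A] .
  show ?thesis using iA iB A nf unfolding set_lebesgue_integral_def set_integrable_def
    by (intro integral_mono) (auto simp: indicator_def)
qed

lemma set_int_zero_transfer:
  fixes u g :: "'a \<Rightarrow> real"
  assumes iu: "set_integrable M S u" and nu: "\<And>x. 0 \<le> u x"
    and ug: "\<And>x. u x = 0 \<Longrightarrow> g x = 0" and z: "(LINT x:S|M. u x) = 0"
  shows "(LINT x:S|M. g x) = 0"
proof -
  have "AE x in M. indicator S x *\<^sub>R u x = 0"
    using z iu nu unfolding set_lebesgue_integral_def set_integrable_def
    by (subst integral_nonneg_eq_0_iff_AE[symmetric]) (auto simp: indicator_def)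
  hence "AE x in M. indicator S x *\<^sub>R g x = 0"
    by eventually_elim (auto simp: indicator_def ug split: if_splits)
  thus ?thesis unfolding set_lebesgue_integral_def by (rule integral_eq_zero_AE)
qed

lemma set_nn_eq_int:
  fixes f :: "'a \<Rightarrow> real"
  assumes i: "set_integrable M A f" and nf: "\<And>x. 0 \<le> f x"
  shows "(\<integral>\<^sup>+x\<in>A. ennreal (f x) \<partial>M) = ennreal (LINT x:A|M. f x)"
proof -
  have "(\<integral>\<^sup>+x\<in>A. ennreal (f x) \<partial>M) = (\<integral>\<^sup>+x. ennreal (indicator A x *\<^sub>R f x) \<partial>M)"
    by (intro nn_integral_cong) (auto simp: indicator_def)
  also have "\<dots> = ennreal (LINT x:A|M. f x)"
    unfolding set_lebesgue_integral_def using i nf unfolding set_integrable_def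
    by (intro nn_integral_eq_integral) (auto simp: indicator_def)
  finally show ?thesis .
qed

lemma ainf_ge1:
  assumes A: "in_Ainf M d w" and rho: "0 < \<rho>" and W: "0 < wm M w (qball d x \<rho>)"
    and Bs: "qball d x \<rho> \<in> sets M" and Bm: "0 < emeasure M (qball d x \<rho>)" "emeasure M (qball d x \<rho>) < \<infinity>"
  shows "1 \<le> Ainf_const M d w"
proof -
  define B where "B = qball d x \<rho>"
  define Wv where "Wv = wm M w B"
  have wt: "weight M d w" and fin: "Ainf_const_enn M d w < \<infinity>" using A unfolding in_Ainf_def by auto
  have wmeas: "w \<in> borel_measurable M" and wn: "\<And>x. 0 \<le> w x" and wi: "set_integrable M B w"
    using wt unfolding weight_def B_def by auto
  have Wp: "0 < Wv" using W unfolding Wv_def B_def .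
  have mB: "emeasure M B = ennreal (measure M B)" using Bm unfolding B_def
    by (simp add: emeasure_eq_ennreal_measure)
  have "0 < ennreal (measure M B)" using Bm(1) mB unfolding B_def by simp
  hence mBp: "0 < measure M B" by (simp add: ennreal_less_zero_iff)
  have int_eq: "(\<integral>\<^sup>+z\<in>B. ennreal \<bar>indicator B z * w z\<bar> \<partial>M) = ennreal Wv"
  proof -
    have "(\<integral>\<^sup>+z\<in>B. ennreal \<bar>indicator B z * w z\<bar> \<partial>M) = (\<integral>\<^sup>+z\<in>B. ennreal (w z) \<partial>M)"
      using wn by (intro nn_integral_cong) (auto simp: indicator_def)
    also have "\<dots> = ennreal Wv" unfolding Wv_def wm_def using set_nn_eq_int[OF wi wn] .
    finally show ?thesis .
  qed
  have mx: "ennreal (Wv / measure M B) \<le> maxf M d (\<lambda>z. indicator B z * w z) y" if "y \<in> B" for y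
  proof -
    have "(\<integral>\<^sup>+z\<in>qball d (fst (x, \<rho>)) (snd (x, \<rho>)). ennreal \<bar>indicator B z * w z\<bar> \<partial>M)
          / emeasure M (qball d (fst (x, \<rho>)) (snd (x, \<rho>))) \<le> maxf M d (\<lambda>z. indicator B z * w z) y"
      unfolding maxf_def using that rho unfolding B_def
      by (intro SUP_upper) auto
    moreover have "(\<integral>\<^sup>+z\<in>qball d (fst (x, \<rho>)) (snd (x, \<rho>)). ennreal \<bar>indicator B z * w z\<bar> \<partial>M)
          / emeasure M (qball d (fst (x, \<rho>)) (snd (x, \<rho>))) = ennreal (Wv / measure M B)"
      unfolding fst_conv snd_conv B_def[symmetric] using int_eq mB mBp Wp by (simp add: divide_ennreal)
    ultimately show ?thesis by simp
  qed
  have "ennreal Wv = (\<integral>\<^sup>+y. ennreal (Wv / measure M B) * indicator B y \<partial>M)"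
    using Bs mB mBp Wp unfolding B_def[symmetric]
    by (simp add: nn_integral_cmult_indicator ennreal_mult''[symmetric])
  also have "\<dots> \<le> (\<integral>\<^sup>+y\<in>B. maxf M d (\<lambda>z. indicator B z * w z) y \<partial>M)"
    using mx by (intro nn_integral_mono) (auto simp: indicator_def)
  finally have le1: "ennreal Wv \<le> (\<integral>\<^sup>+y\<in>B. maxf M d (\<lambda>z. indicator B z * w z) y \<partial>M)" .
  have "1 = ennreal Wv / ennreal Wv" using Wp by (simp add: divide_ennreal)
  also have "\<dots> \<le> (\<integral>\<^sup>+y\<in>B. maxf M d (\<lambda>z. indicator B z * w z) y \<partial>M) / ennreal Wv"
    using le1 by (rule divide_right_mono_ennreal)
  also have "\<dots> \<le> Ainf_const_enn M d w"
  proof -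
    have mem: "(x, \<rho>) \<in> {(x, y). 0 < y}" using rho by simp
    show ?thesis unfolding Ainf_const_enn_def Wv_def B_def
      by (rule SUP_upper2[OF mem]) simp
  qed
  finally have "1 \<le> Ainf_const_enn M d w" .
  hence "enn2real 1 \<le> enn2real (Ainf_const_enn M d w)" using fin by (intro enn2real_mono) auto
  thus ?thesis unfolding Ainf_const_def by simp
qed


lemma sq_powr: "0 \<le> (y::real) \<Longrightarrow> (y powr s)\<^sup>2 \<le> y powr (2 * s - 1) * y"
proof (cases "y = 0")
  case False
  assume y: "0 \<le> y"
  hence yp: "0 < y" using False by simp
  have "(y powr s)\<^sup>2 = y powr (s + s)" by (simp only: power2_eq_square powr_add[symmetric])
  also have "\<dots> = y powr (2 * s - 1) * y powr 1" by (subst powr_add[symmetric]) (simp add: algebra_simps)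
  also have "\<dots> = y powr (2 * s - 1) * y" using yp by simp
  finally show ?thesis by simp
qed simp

lemma rh_const:
  assumes "in_RH M d cd q u"
  shows "RH_holds M d cd q u (RH_const M d cd q u) \<and> 0 \<le> RH_const M d cd q u"
proof -
  define S where "S = {C. 0 \<le> C \<and> RH_holds M d cd q u C}"
  from assms obtain C0 where C0: "RH_holds M d cd q u C0" and wt: "weight M d u"
    unfolding in_RH_def by auto
  have un: "\<And>x. 0 \<le> u x" using wt unfolding weight_def by auto
  have avg0: "0 \<le> wm M u (qball d x \<rho>) / measure M (qball d x \<rho>)" for x \<rho>
    unfolding wm_def set_lebesgue_integral_def using un by (simp add: indicator_def)
  have mono: "RH_holds M d cd q u C'" if "RH_holds M d cd q u C" "C \<le> C'" for C C'
    using that avg0 unfolding RH_holds_def by (meson mult_right_mono order_trans)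
  have C1: "max C0 0 \<in> S" unfolding S_def using mono[OF C0, of "max C0 0"] by simp
  have bdd: "bdd_below S" unfolding S_def by (rule bdd_belowI[of _ 0]) auto
  have Sne: "S \<noteq> {}" using C1 by blast
  have K0: "0 \<le> Inf S" by (rule cInf_greatest[OF Sne]) (auto simp: S_def)
  have "RH_holds M d cd q u (Inf S)"
    unfolding RH_holds_def
  proof (intro allI impI conjI)
    fix x \<rho> :: real and y assume "0 < \<rho>"
    show "set_integrable M (qball d y \<rho>) (\<lambda>y. u y powr q)" using C0 \<open>0 < \<rho>\<close> unfolding RH_holds_def by auto
    define L where "L = (wm M (\<lambda>y. u y powr q) (qball d y \<rho>) / measure M (qball d y \<rho>)) powr (1 / q)"
    define a where "a = wm M u (qball d y (cd * \<rho>)) / measure M (qball d y (cd * \<rho>))"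
    have a0: "0 \<le> a" unfolding a_def by (rule avg0)
    have LC: "L \<le> C * a" if "C \<in> S" for C using that \<open>0 < \<rho>\<close> unfolding S_def RH_holds_def L_def a_def by auto
    show "L \<le> Inf S * a"
    proof (cases "a = 0")
      case True thus ?thesis using LC[OF C1] by simp
    next
      case False
      hence ap: "0 < a" using a0 by simp
      have "L / a \<le> Inf S" using LC ap by (intro cInf_greatest[OF Sne]) (auto simp: pos_divide_le_eq mult.commute)
      thus ?thesis using ap by (simp add: pos_divide_le_eq)
    qed
  qed
  thus ?thesis using K0 unfolding RH_const_def S_def by simp
qed

theorem lemma3p9:
  fixes \<mu> :: "'a measure" and d :: "'a \<Rightarrow> 'a \<Rightarrow> real"
    and A0 Cdb cd \<tau> c \<delta> c0 C0 :: real
    and J :: "int \<Rightarrow> 'i set" and D :: "int \<Rightarrow> 'i \<Rightarrow> 'a set" and z :: "int \<Rightarrow> 'i \<Rightarrow> 'a"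
  assumes "homogeneous_space \<mu> d A0 Cdb"
    and "1 \<le> cd"
    and "sharp_RHI \<mu> d cd \<tau> c"
    and "dyadic_system \<mu> d \<delta> c0 C0 J D z"
  shows "\<exists>C. \<forall>r u k j E. 1 \<le> r \<longrightarrow> in_RH \<mu> d cd (2 * r - 1) u
            \<longrightarrow> in_Ainf \<mu> d (\<lambda>x. u x powr r)
            \<longrightarrow> j \<in> J k \<longrightarrow> E \<in> sets \<mu> \<longrightarrow> E \<subseteq> D k j \<longrightarrow>
            (let s = 1 + 1 / (2 * \<tau> * Ainf_const \<mu> d (\<lambda>x. u x powr r));
                 cdQ = qball d (z k j) (cd * C0 * \<delta> powr (real_of_int k))
             in wm \<mu> (\<lambda>x. u x powr (s * r)) E / wm \<mu> (\<lambda>x. u x powr (s * r)) cdQ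
                \<le> C * RH_const \<mu> d cd (2 * r - 1) u powr ((2 * r - 1) / 4)
                    * (wm \<mu> u E / wm \<mu> u cdQ) powr (1 / 4))"
proof -
  note hs = assms(1)[unfolded homogeneous_space_def]
  have bsets: "\<And>x \<rho>. qball d x \<rho> \<in> sets \<mu>" using hs by blast
  have bpos: "\<And>x \<rho>. 0 < \<rho> \<Longrightarrow> 0 < emeasure \<mu> (qball d x \<rho>)"
    and bfin: "\<And>x \<rho>. 0 < \<rho> \<Longrightarrow> emeasure \<mu> (qball d x \<rho>) < \<infinity>" using hs by blast+
  have taup: "0 < \<tau>" and sharp: "\<And>w t. in_Ainf \<mu> d w \<Longrightarrow> 1 \<le> t \<Longrightarrow>
      t \<le> 1 + 1 / (\<tau> * Ainf_const \<mu> d w) \<Longrightarrow> RH_holds \<mu> d cd t w c"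
    using assms(3) unfolding sharp_RHI_def by blast+
  note dy = assms(4)[unfolded dyadic_system_def]
  have dp: "0 < \<delta>" and C0p: "0 < C0" using dy by auto
  have Dsub: "\<And>k j. j \<in> J k \<Longrightarrow> D k j \<subseteq> qball d (z k j) (C0 * \<delta> powr (real_of_int k))"
    using dy by blast
  define Cc where "Cc = max 1 c powr ((1 + 1 / \<tau>) / 2)"
  show ?thesis
  proof (rule exI[of _ Cc], intro allI impI)
    fix r u k j E
    assume r1: "1 \<le> r" and uRH: "in_RH \<mu> d cd (2 * r - 1) u"
      and wA: "in_Ainf \<mu> d (\<lambda>x. u x powr r)" and jJ: "j \<in> J k"
      and Es: "E \<in> sets \<mu>" and ED: "E \<subseteq> D k j"
    define w where "w = (\<lambda>x. u x powr r)"
    define A where "A = Ainf_const \<mu> d w"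
    define s where "s = 1 + 1 / (2 * \<tau> * A)"
    define t where "t = 2 * s - 1"
    define q where "q = 2 * r - 1"
    define K where "K = RH_const \<mu> d cd q u"
    define \<rho> where "\<rho> = C0 * \<delta> powr (real_of_int k)"
    define x0 where "x0 = z k j"
    define B where "B = qball d x0 \<rho>"
    define B' where "B' = qball d x0 (cd * \<rho>)"
    have rhop: "0 < \<rho>" unfolding \<rho>_def using C0p dp by simp
    have cdrp: "0 < cd * \<rho>" using rhop assms(2) by simp
    have cdQ: "qball d (z k j) (cd * C0 * \<delta> powr (real_of_int k)) = B'"
      unfolding B'_def x0_def \<rho>_def by (simp add: mult.assoc)
    have EB: "E \<subseteq> B" using Dsub[OF jJ] ED unfolding B_def x0_def \<rho>_def by blast
    have rcd: "\<rho> \<le> cd * \<rho>" using mult_right_mono[OF assms(2), of \<rho>] rhop by simp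
    have BB': "B \<subseteq> B'" unfolding B_def B'_def qball_def using rcd by auto
    have uw: "(\<lambda>x. u x powr (s * r)) = (\<lambda>x. w x powr s)"
      unfolding w_def by (simp add: powr_powr mult.commute)
    have uwt: "weight \<mu> d u" using uRH unfolding in_RH_def by simp
    have un: "\<And>x. 0 \<le> u x" using uwt unfolding weight_def by simp
    have ui: "\<And>x \<rho>. set_integrable \<mu> (qball d x \<rho>) u" using uwt unfolding weight_def by simp
    have wwt: "weight \<mu> d w" using wA unfolding in_Ainf_def w_def by simp
    have wn: "\<And>x. 0 \<le> w x" using wwt unfolding weight_def by simp
    have wi: "\<And>x \<rho>. set_integrable \<mu> (qball d x \<rho>) w" using wwt unfolding weight_def by simp
    have KRH: "RH_holds \<mu> d cd q u K" and K0: "0 \<le> K"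
      using rh_const[OF uRH] unfolding K_def q_def by auto
    have uqi: "set_integrable \<mu> B (\<lambda>y. u y powr q)" using KRH rhop unfolding RH_holds_def B_def by blast
    have Bs: "B \<in> sets \<mu>" "B' \<in> sets \<mu>" unfolding B_def B'_def by (rule bsets)+
    have Bfin: "emeasure \<mu> B \<noteq> \<infinity>" "emeasure \<mu> B' \<noteq> \<infinity>"
      unfolding B_def B'_def using bfin rhop cdrp by (simp_all add: less_top)
    have Bpos: "0 < emeasure \<mu> B" "0 < emeasure \<mu> B'"
      unfolding B_def B'_def using bpos rhop cdrp by auto
    have mp: "0 < measure \<mu> B" "0 < measure \<mu> B'"
      using Bpos Bfin by (auto simp: measure_def enn2real_positive_iff less_top)
    have mm: "measure \<mu> B \<le> measure \<mu> B'"
      using Bs Bfin BB' by (intro measure_mono_fmeasurable) (auto simp: fmeasurable_def less_top)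
    define IE where "IE = wm \<mu> (\<lambda>x. w x powr s) E"
    define I' where "I' = wm \<mu> (\<lambda>x. w x powr s) B'"
    define UE where "UE = wm \<mu> u E"
    define U' where "U' = wm \<mu> u B'"
    have main: "IE / I' \<le> Cc * K powr (q / 4) * (UE / U') powr (1 / 4)"
    proof (cases "U' = 0")
      case True
      have zz: "\<And>x. u x = 0 \<Longrightarrow> w x powr s = 0" unfolding w_def by simp
      have uiB': "set_integrable \<mu> B' u" unfolding B'_def by (rule ui)
      have "I' = 0" unfolding I'_def wm_def
        by (rule set_int_zero_transfer[OF uiB' un zz True[unfolded U'_def wm_def]])
      thus ?thesis using True by simp
    next
      case False
      have U'0: "0 \<le> U'" unfolding U'_def wm_def by (rule set_int_nonneg) (rule un)
      hence U'p: "0 < U'" using False by simp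
      have h8: "(U' / measure \<mu> B') powr r \<le> wm \<mu> w B' / measure \<mu> B'"
        unfolding U'_def wm_def w_def
        using pm_lemma[of B' \<mu> u r] Bs Bfin mp un ui wi r1 unfolding B'_def w_def by auto
      have W'p: "0 < wm \<mu> w B'"
      proof -
        have "0 < (U' / measure \<mu> B') powr r" using U'p mp by simp
        also note h8
        finally show ?thesis using mp by (simp add: zero_less_divide_iff)
      qed
      have A1: "1 \<le> A" unfolding A_def
        using ainf_ge1[of \<mu> d w "cd * \<rho>" x0] wA W'p Bpos Bfin cdrp bsets
        unfolding B'_def w_def by (auto simp: less_top)
      have tA: "t = 1 + 1 / (\<tau> * A)" unfolding t_def s_def using taup A1 by (simp add: field_simps)
      have s1: "1 \<le> s" unfolding s_def using taup A1 by simp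
      have sle: "s \<le> 1 + 1 / (\<tau> * A)" unfolding s_def using taup A1 by (simp add: field_simps)
      have t1: "1 \<le> t" unfolding t_def using s1 by simp
      have wA': "in_Ainf \<mu> d w" using wA unfolding w_def .
      have RHt: "RH_holds \<mu> d cd t w c" using sharp[OF wA' t1] tA unfolding A_def by simp
      have RHs: "RH_holds \<mu> d cd s w c" using sharp[OF wA' s1] sle unfolding A_def by simp
      have wti: "set_integrable \<mu> B (\<lambda>y. w y powr t)" using RHt rhop unfolding RH_holds_def B_def by blast
      have wsi: "set_integrable \<mu> B' (\<lambda>y. w y powr s)" using RHs cdrp unfolding RH_holds_def B'_def by blast
      have wsiB: "set_integrable \<mu> B (\<lambda>y. w y powr s)" using set_integrable_subset[OF wsi Bs(1) BB'] .
      have h5: "(wm \<mu> (\<lambda>y. w y powr t) B / measure \<mu> B) powr (1 / t) \<le> c * (wm \<mu> w B' / measure \<mu> B')"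
        using RHt rhop unfolding RH_holds_def B_def B'_def by blast
      have h6: "(wm \<mu> (\<lambda>y. u y powr q) B / measure \<mu> B) powr (1 / q) \<le> K * (U' / measure \<mu> B')"
        using KRH rhop unfolding RH_holds_def B_def B'_def U'_def by blast
      have h7: "(wm \<mu> w B' / measure \<mu> B') powr s \<le> I' / measure \<mu> B'"
        unfolding I'_def wm_def
        using pm_lemma[of B' \<mu> w s] Bs Bfin mp wn wi wsi s1 unfolding B'_def by auto
      have wEi: "set_integrable \<mu> E w" using set_integrable_subset[OF wi Es EB[unfolded B_def]] .
      have uEi: "set_integrable \<mu> E u" using set_integrable_subset[OF ui Es EB[unfolded B_def]] .
      have h1: "IE \<le> sqrt (wm \<mu> (\<lambda>y. w y powr t) E) * sqrt (wm \<mu> w E)"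
        unfolding IE_def wm_def
      proof (rule cs_lemma)
        show "set_integrable \<mu> E (\<lambda>x. w x powr s)" using set_integrable_subset[OF wsiB Es EB] .
        show "set_integrable \<mu> E (\<lambda>x. w x powr t)" using set_integrable_subset[OF wti Es EB] .
        show "set_integrable \<mu> E w" by (rule wEi)
        show "\<And>x. (w x powr s)\<^sup>2 \<le> w x powr t * w x" unfolding t_def using wn by (rule sq_powr)
      qed (auto simp: wn)
      have h2: "wm \<mu> (\<lambda>y. w y powr t) E \<le> wm \<mu> (\<lambda>y. w y powr t) B"
        unfolding wm_def using wti Es EB by (intro set_int_subset_le) auto
      have h3: "wm \<mu> w E \<le> sqrt (wm \<mu> (\<lambda>y. u y powr q) E) * sqrt UE"
        unfolding UE_def wm_def
      proof (rule cs_lemma)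
        show "set_integrable \<mu> E w" by (rule wEi)
        show "set_integrable \<mu> E (\<lambda>x. u x powr q)" using set_integrable_subset[OF uqi Es EB] .
        show "set_integrable \<mu> E u" by (rule uEi)
        show "\<And>x. (w x)\<^sup>2 \<le> u x powr q * u x" unfolding q_def w_def using un by (rule sq_powr)
      qed (auto simp: wn un)
      have h4: "wm \<mu> (\<lambda>y. u y powr q) E \<le> wm \<mu> (\<lambda>y. u y powr q) B"
        unfolding wm_def using uqi Es EB by (intro set_int_subset_le) auto
      have nn: "0 \<le> IE" "0 \<le> wm \<mu> (\<lambda>y. w y powr t) E" "0 \<le> wm \<mu> w E"
        "0 \<le> wm \<mu> (\<lambda>y. u y powr q) E" "0 \<le> UE"
        unfolding IE_def UE_def wm_def using wn un by (auto intro: set_int_nonneg)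
      have alg: "IE / I' \<le> c powr (t / 2) * K powr (q / 4) * (UE / U') powr (1 / 4)"
        by (rule alg_lemma[OF h1 h2 h3 h4 h5 h6 h7 h8 mp(1) mm U'p t_def q_def s1 r1 nn K0])
      have c0: "0 \<le> c"
      proof -
        have "0 \<le> (wm \<mu> (\<lambda>y. w y powr t) B / measure \<mu> B) powr (1 / t)" by simp
        also note h5
        finally have ge: "0 \<le> c * (wm \<mu> w B' / measure \<mu> B')" .
        have Xp: "0 < wm \<mu> w B' / measure \<mu> B'" using W'p mp by simp
        show ?thesis
        proof (rule ccontr)
          assume "\<not> 0 \<le> c"
          hence "c < 0" by linarith
          hence "c * (wm \<mu> w B' / measure \<mu> B') < 0" using mult_neg_pos[OF _ Xp] by blast
          thus False using ge by linarith
        qed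
      qed
      have tle: "t / 2 \<le> (1 + 1 / \<tau>) / 2"
      proof -
        have "1 / (\<tau> * A) \<le> 1 / \<tau>" using taup A1
          by (simp add: divide_simps mult_le_cancel_left1 mult_le_cancel_right1)
        thus ?thesis unfolding tA by simp
      qed
      have cC: "c powr (t / 2) \<le> Cc"
      proof -
        have "c powr (t / 2) \<le> max 1 c powr (t / 2)" using c0 t1 by (intro powr_mono2) auto
        also have "\<dots> \<le> Cc" unfolding Cc_def using tle by (intro powr_mono) auto
        finally show ?thesis .
      qed
      have "c powr (t / 2) * K powr (q / 4) * (UE / U') powr (1 / 4)
          \<le> Cc * K powr (q / 4) * (UE / U') powr (1 / 4)"
        using cC by (intro mult_right_mono) auto
      with alg show ?thesis by linarith
    qed
    show "let s = 1 + 1 / (2 * \<tau> * Ainf_const \<mu> d (\<lambda>x. u x powr r));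
                 cdQ = qball d (z k j) (cd * C0 * \<delta> powr (real_of_int k))
             in wm \<mu> (\<lambda>x. u x powr (s * r)) E / wm \<mu> (\<lambda>x. u x powr (s * r)) cdQ
                \<le> Cc * RH_const \<mu> d cd (2 * r - 1) u powr ((2 * r - 1) / 4)
                    * (wm \<mu> u E / wm \<mu> u cdQ) powr (1 / 4)"
      unfolding Let_def cdQ
      using main unfolding IE_def I'_def UE_def U'_def K_def q_def s_def A_def w_def
      by (simp add: powr_powr mult.commute)
  qed
qed

end
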